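(* Let $\Sigma_1 \subset \mathbb{R}^{N_1}$ and $\Sigma_2 \subset \mathbb{R}^{N_2}$ be nonempty, and let $\Sigma = \Sigma_1 \times \Sigma_2 \subset \mathbb{R}^{N_1}\times\mathbb{R}^{N_2}$, equipped with the norm $\|(x_1,x_2)\|_2 = \sqrt{\|x_1\|_2^2 + \|x_2\|_2^2}$. For $i = 1,2$ let $P_i$ be a generalized projection onto $\Sigma_i$ minimizing $\beta_{\Sigma_i}$ over all generalized projections onto $\Sigma_i$, with $\beta_{\Sigma_i}(P_i) < \infty$. Define $P_\Sigma(z_1, z_2) = (P_1(z_1), P_2(z_2))$ (i.e., the set $P_1(z_1)\times P_2(z_2)$). Then $P_\Sigma$ minimizes $\beta_\Sigma$ over all generalized projections onto $\Sigma$.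
   Context: A (set-valued) generalized projection onto $\Sigma \subset \mathbb{R}^N$ is a map $P$ assigning to each $z \in \mathbb{R}^N$ a nonempty subset $P(z) \subset \Sigma$. Restricted Lipschitz property: $P$ has the restricted $\beta$-Lipschitz property with respect to $\Sigma$ if for all $z \in \mathbb{R}^N$, all $x \in \Sigma$ and all $u \in P(z)$, $\|u - x\|_2 \le \beta\|z - x\|_2$; $\beta_\Sigma(P)$ denotes the smallest such $\beta$ (possibly $+\infty$). *)

theory Defs
  imports "HOL-Analysis.Analysis"
begin

definition gen_proj :: "'a set \<Rightarrow> ('a \<Rightarrow> 'a set) \<Rightarrow> bool" where
  "gen_proj S P \<longleftrightarrow> (\<forall>z. P z \<noteq> {} \<and> P z \<subseteq> S)"

definition restricted_lipschitz ::
  "'a::real_normed_vector set \<Rightarrow> ('a \<Rightarrow> 'a set) \<Rightarrow> real \<Rightarrow> bool" where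
  "restricted_lipschitz S P \<beta> \<longleftrightarrow>
     (\<forall>z. \<forall>x\<in>S. \<forall>u\<in>P z. norm (u - x) \<le> \<beta> * norm (z - x))"

definition beta_Sigma :: "'a::real_normed_vector set \<Rightarrow> ('a \<Rightarrow> 'a set) \<Rightarrow> ereal" where
  "beta_Sigma S P = Inf {ereal \<beta> | \<beta>. 0 \<le> \<beta> \<and> restricted_lipschitz S P \<beta>}"

definition optimal_proj :: "'a::real_normed_vector set \<Rightarrow> ('a \<Rightarrow> 'a set) \<Rightarrow> bool" where
  "optimal_proj S P \<longleftrightarrow> gen_proj S P \<and> (\<forall>Q. gen_proj S Q \<longrightarrow> beta_Sigma S P \<le> beta_Sigma S Q)"

end

theory Submission
  imports Defs
begin

lemma rl_mono:
  assumes "restricted_lipschitz S P b" "b \<le> c"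
  shows "restricted_lipschitz S P c"
  using assms unfolding restricted_lipschitz_def
  by (meson mult_right_mono norm_ge_zero order_trans)

lemma beta_lessD:
  assumes "beta_Sigma S P < ereal c"
  shows "0 \<le> c \<and> restricted_lipschitz S P c"
proof -
  from assms obtain y where "y \<in> {ereal \<beta> | \<beta>. 0 \<le> \<beta> \<and> restricted_lipschitz S P \<beta>}" "y < ereal c"
    unfolding beta_Sigma_def by (meson Inf_less_iff)
  then obtain b where "0 \<le> b" "restricted_lipschitz S P b" "b < c" by auto
  then show ?thesis using rl_mono[of S P b c] by auto
qed

lemma beta_le:
  assumes "0 \<le> c" "restricted_lipschitz S P c"
  shows "beta_Sigma S P \<le> ereal c"
  unfolding beta_Sigma_def using assms by (intro Inf_lower) auto

lemma beta_nonneg: "0 \<le> beta_Sigma S P"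
  unfolding beta_Sigma_def by (intro Inf_greatest) auto

lemma pair_ineq:
  fixes a b n1 n2 c :: real
  assumes "0 \<le> a" "0 \<le> b" "a \<le> c * n1" "b \<le> c * n2" "0 \<le> c"
  shows "sqrt (a^2 + b^2) \<le> c * sqrt (n1^2 + n2^2)"
proof -
  have "a^2 \<le> (c*n1)^2" using assms by (intro power_mono) auto
  moreover have "b^2 \<le> (c*n2)^2" using assms by (intro power_mono) auto
  ultimately have "a^2 + b^2 \<le> c^2 * (n1^2 + n2^2)" by (simp add: power_mult_distrib algebra_simps)
  hence "sqrt (a^2 + b^2) \<le> sqrt (c^2 * (n1^2 + n2^2))" by (rule real_sqrt_le_mono)
  also have "\<dots> = c * sqrt (n1^2 + n2^2)" using assms by (simp add: real_sqrt_mult)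
  finally show ?thesis .
qed

lemma prod_rl:
  assumes "restricted_lipschitz S1 P1 c" "restricted_lipschitz S2 P2 c" "0 \<le> c"
  shows "restricted_lipschitz (S1 \<times> S2) (\<lambda>(z1, z2). P1 z1 \<times> P2 z2) c"
  unfolding restricted_lipschitz_def
proof (intro allI ballI)
  fix z x u assume "x \<in> S1 \<times> S2" "u \<in> (case z of (z1, z2) \<Rightarrow> P1 z1 \<times> P2 z2)"
  then obtain z1 z2 x1 x2 u1 u2 where e: "z = (z1,z2)" "x = (x1,x2)" "u = (u1,u2)"
    and h: "x1 \<in> S1" "x2 \<in> S2" "u1 \<in> P1 z1" "u2 \<in> P2 z2"
    by (cases z, cases x, cases u) auto
  have "norm (u1 - x1) \<le> c * norm (z1 - x1)" using assms(1) h unfolding restricted_lipschitz_def by blast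
  moreover have "norm (u2 - x2) \<le> c * norm (z2 - x2)" using assms(2) h unfolding restricted_lipschitz_def by blast
  ultimately show "norm (u - x) \<le> c * norm (z - x)"
    using e assms(3) by (simp add: norm_Pair pair_ineq)
qed

theorem lemma2:
  fixes S1 :: "(real ^ 'n1) set" and S2 :: "(real ^ 'n2) set"
    and P1 :: "real ^ 'n1 \<Rightarrow> (real ^ 'n1) set"
    and P2 :: "real ^ 'n2 \<Rightarrow> (real ^ 'n2) set"
  assumes "S1 \<noteq> {}" and "S2 \<noteq> {}"
    and "optimal_proj S1 P1" and "optimal_proj S2 P2"
    and "beta_Sigma S1 P1 < \<infinity>" and "beta_Sigma S2 P2 < \<infinity>"
  shows "optimal_proj (S1 \<times> S2) (\<lambda>(z1, z2). P1 z1 \<times> P2 z2)"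
proof -
  let ?P = "(\<lambda>(z1, z2). P1 z1 \<times> P2 z2)"
  let ?M = "max (beta_Sigma S1 P1) (beta_Sigma S2 P2)"
  have g1: "gen_proj S1 P1" and g2: "gen_proj S2 P2" using assms(3,4) unfolding optimal_proj_def by auto
  have gP: "gen_proj (S1 \<times> S2) ?P" using g1 g2 unfolding gen_proj_def by auto
  have up: "beta_Sigma (S1 \<times> S2) ?P \<le> ?M"
  proof (rule dense_ge)
    fix w assume w: "?M < w"
    show "beta_Sigma (S1 \<times> S2) ?P \<le> w"
    proof (cases w)
      case (real c)
      have "beta_Sigma S1 P1 < ereal c" "beta_Sigma S2 P2 < ereal c" using w real by auto
      then have "0 \<le> c" "restricted_lipschitz S1 P1 c" "restricted_lipschitz S2 P2 c"
        using beta_lessD by blast+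
      then show ?thesis using real prod_rl beta_le by metis
    next
      case PInf then show ?thesis by simp
    next
      case MInf then show ?thesis using w by simp
    qed
  qed
  have low: "?M \<le> beta_Sigma (S1 \<times> S2) Q" if gQ: "gen_proj (S1 \<times> S2) Q" for Q
  proof -
    obtain a1 where a1: "a1 \<in> S1" using assms(1) by auto
    obtain a2 where a2: "a2 \<in> S2" using assms(2) by auto
    define Q1 where "Q1 = (\<lambda>z1. fst ` Q (z1, a2))"
    define Q2 where "Q2 = (\<lambda>z2. snd ` Q (a1, z2))"
    have gQ1: "gen_proj S1 Q1" using gQ unfolding gen_proj_def Q1_def by fastforce
    have gQ2: "gen_proj S2 Q2" using gQ unfolding gen_proj_def Q2_def by fastforce
    have r1: "restricted_lipschitz S1 Q1 b" if "restricted_lipschitz (S1 \<times> S2) Q b" for b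
      unfolding restricted_lipschitz_def
    proof (intro allI ballI)
      fix z x u assume "x \<in> S1" "u \<in> Q1 z"
      then obtain v where v: "v \<in> Q (z, a2)" "u = fst v" unfolding Q1_def by auto
      have "norm (v - (x, a2)) \<le> b * norm ((z, a2) - (x, a2))"
        using that v `x \<in> S1` a2 unfolding restricted_lipschitz_def by blast
      moreover have "norm (u - x) \<le> norm (v - (x, a2))" using v
        by (cases v) (simp add: norm_Pair)
      ultimately show "norm (u - x) \<le> b * norm (z - x)" by simp
    qed
    have r2: "restricted_lipschitz S2 Q2 b" if "restricted_lipschitz (S1 \<times> S2) Q b" for b
      unfolding restricted_lipschitz_def
    proof (intro allI ballI)
      fix z x u assume "x \<in> S2" "u \<in> Q2 z"
      then obtain v where v: "v \<in> Q (a1, z)" "u = snd v" unfolding Q2_def by auto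
      have "norm (v - (a1, x)) \<le> b * norm ((a1, z) - (a1, x))"
        using that v `x \<in> S2` a1 unfolding restricted_lipschitz_def by blast
      moreover have "norm (u - x) \<le> norm (v - (a1, x))" using v
        by (cases v) (simp add: norm_Pair)
      ultimately show "norm (u - x) \<le> b * norm (z - x)" by simp
    qed
    have "beta_Sigma S1 Q1 \<le> beta_Sigma (S1 \<times> S2) Q"
      unfolding beta_Sigma_def using r1 by (intro Inf_superset_mono) auto
    moreover have "beta_Sigma S2 Q2 \<le> beta_Sigma (S1 \<times> S2) Q"
      unfolding beta_Sigma_def using r2 by (intro Inf_superset_mono) auto
    moreover have "beta_Sigma S1 P1 \<le> beta_Sigma S1 Q1" using assms(3) gQ1 unfolding optimal_proj_def by auto
    moreover have "beta_Sigma S2 P2 \<le> beta_Sigma S2 Q2" using assms(4) gQ2 unfolding optimal_proj_def by auto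
    ultimately show ?thesis by auto
  qed
  show ?thesis unfolding optimal_proj_def using gP up low by (meson order_trans)
qed

end
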